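(* Let $N\in\mathbb N$, let $\{\pi_n\in\Pi\}_{n=1}^N$ be policies chosen by a learner in the online protocol described in the context, and let $\{w_n>0\}_{n=1}^N$ be weights, $w_{1:N}=\sum_{n=1}^N w_n$. Then $$\mathbb E\Big[\sum_{n=1}^{N}\frac{w_n J(\pi_n)}{w_{1:N}}\Big]\le J(\pi^* )+C_{\pi^*}\Big(\epsilon_\Pi^w+\mathbb E\Big[\frac{\mathrm{regret}^w(\Pi)}{w_{1:N}}\Big]\Big),$$ where $\mathrm{regret}^w(\Pi)=\max_{\pi\in\Pi}\sum_{n=1}^N\big(w_n\tilde f_n(\pi_n)-w_n\tilde f_n(\pi)\big)$ and the expectation is over the sampling of the $\tilde f_n$.
   Context: Imitation learning setting. $\Pi$ is a compact convex subset of a normed space with norm $\|\cdot\|$ (dual norm $\|\cdot\|_*$); its elements are (parameters of) policies. Each policy $\pi$ has an expected cost $J(\pi)\in\mathbb R$ and induces a distribution $d_\pi$ over state–time pairs $(s,t)$; $\pi_s$ is the action distribution of $\pi$ at state $s$. There is a fixed expert policy $\pi^*$, a nonnegative function $D(\pi^*_s\|\pi_s)$ and a constant $C_{\pi^*}\ge 0$ such that $J(\pi)-J(\pi^* )\le C_{\pi^*}\,\mathbb E_{(s,t)\sim d_\pi}[D(\pi^*_s\|\pi_s)]$ for all $\pi\in\Pi$. Define $F(\pi',\pi)=\mathbb E_{(s,t)\sim d_{\pi'}}[D(\pi^*_s\|\pi_s)]$. Online protocol: in round $n$ the learner picks $\pi_n$ based only on information from rounds $1,\dots,n-1$; then the per-round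 cost $f_n(\pi)=F(\pi_n,\pi)$ is defined and a random function $\tilde f_n$ is sampled which is an unbiased estimate of $f_n$ given $\pi_n$ (i.e. $\mathbb E[\tilde f_n(\pi)\mid \text{past},\pi_n]=f_n(\pi)$ for all $\pi$). The constant $\epsilon_\Pi^w$ is such that for all $N\in\mathbb N$ and all weights $\{\theta_n>0\}_{n=1}^N$ with $\sum_n\theta_n=1$: $\mathbb E\big[\max_{\{\pi_n\in\Pi\}}\min_{\pi\in\Pi}\sum_{n=1}^N\theta_n\tilde f_n(\pi)\big]\le\epsilon_\Pi^w$. *)

theory Defs
  imports "HOL-Probability.Probability"
begin

definition Fcost ::
  "('p \<Rightarrow> ('s \<times> nat) measure) \<Rightarrow> ('p \<Rightarrow> 's \<Rightarrow> 'a pmf) \<Rightarrow> ('a pmf \<Rightarrow> 'a pmf \<Rightarrow> real)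
    \<Rightarrow> 'p \<Rightarrow> 'p \<Rightarrow> 'p \<Rightarrow> real" where
  "Fcost d act Div pstar p' p = (\<integral>st. Div (act pstar (fst st)) (act p (fst st)) \<partial>(d p'))"

text \<open>The minimum / maximum of g over S exists (as presupposed by the paper's min / max).\<close>
definition attains_min :: "'b set \<Rightarrow> ('b \<Rightarrow> real) \<Rightarrow> bool" where
  "attains_min S g \<longleftrightarrow> (\<exists>x\<in>S. \<forall>y\<in>S. g x \<le> g y)"

definition attains_max :: "'b set \<Rightarrow> ('b \<Rightarrow> real) \<Rightarrow> bool" where
  "attains_max S g \<longleftrightarrow> (\<exists>x\<in>S. \<forall>y\<in>S. g y \<le> g x)"

definition regret_w :: "(nat \<Rightarrow> real) \<Rightarrow> nat \<Rightarrow> 'p set \<Rightarrow> (nat \<Rightarrow> 'p \<Rightarrow> real) \<Rightarrow> (nat \<Rightarrow> 'p) \<Rightarrow> real" where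
  "regret_w w N Pol fs ps = (SUP p\<in>Pol. (\<Sum>n=1..N. w n * fs n (ps n) - w n * fs n p))"

end

theory Submission
  imports Defs
begin

theorem lemma1:
  fixes M :: "'w measure" and G :: "nat \<Rightarrow> 'w measure"
    and Pol :: "'p::real_normed_vector set"
    and J :: "'p \<Rightarrow> real" and pstar :: 'p and C :: real
    and d :: "'p \<Rightarrow> ('s \<times> nat) measure" and act :: "'p \<Rightarrow> 's \<Rightarrow> 'a pmf"
    and Div :: "'a pmf \<Rightarrow> 'a pmf \<Rightarrow> real"
    and pis :: "nat \<Rightarrow> 'w \<Rightarrow> 'p"
    and ft :: "nat \<Rightarrow> 'w \<Rightarrow> 'p \<Rightarrow> 'p \<Rightarrow> real"
    and eps :: real and N :: nat and w :: "nat \<Rightarrow> real"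
  assumes prob: "prob_space M"
    and filt_sub: "\<And>n. subalgebra M (G n)"
    and filt_mono: "\<And>n. sets (G n) \<subseteq> sets (G (Suc n))"
    and Pi_compact: "compact Pol" and Pi_convex: "convex Pol"
    and d_prob: "\<And>p. p \<in> Pol \<Longrightarrow> prob_space (d p)"
    and D_nonneg: "\<And>x y. Div x y \<ge> 0"
    and D_int: "\<And>p q. p \<in> Pol \<Longrightarrow> q \<in> Pol \<Longrightarrow>
         integrable (d p) (\<lambda>st. Div (act pstar (fst st)) (act q (fst st)))"
    and C_nonneg: "C \<ge> 0"
    and perf: "\<And>p. p \<in> Pol \<Longrightarrow> J p - J pstar \<le> C * Fcost d act Div pstar p p"
    and pis_Pi: "\<And>n \<omega>. n \<ge> 1 \<Longrightarrow> \<omega> \<in> space M \<Longrightarrow> pis n \<omega> \<in> Pol"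
    and pis_meas: "\<And>n. n \<ge> 1 \<Longrightarrow> pis n \<in> borel_measurable (G (n - 1))"
    and ft_meas: "\<And>n p q. n \<ge> 1 \<Longrightarrow> p \<in> Pol \<Longrightarrow> q \<in> Pol \<Longrightarrow>
         (\<lambda>\<omega>. ft n \<omega> p q) \<in> borel_measurable (G n)"
    and unbiased: "\<And>n \<sigma> A. n \<ge> 1 \<Longrightarrow> \<sigma> \<in> borel_measurable (G (n - 1)) \<Longrightarrow>
         (\<forall>\<omega>\<in>space M. \<sigma> \<omega> \<in> Pol) \<Longrightarrow> A \<in> sets (G (n - 1)) \<Longrightarrow>
         integrable M (\<lambda>\<omega>. ft n \<omega> (pis n \<omega>) (\<sigma> \<omega>)) \<and>
         integrable M (\<lambda>\<omega>. Fcost d act Div pstar (pis n \<omega>) (\<sigma> \<omega>)) \<and>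
         (\<integral>\<omega>. indicator A \<omega> * ft n \<omega> (pis n \<omega>) (\<sigma> \<omega>) \<partial>M)
           = (\<integral>\<omega>. indicator A \<omega> * Fcost d act Div pstar (pis n \<omega>) (\<sigma> \<omega>) \<partial>M)"
    and eps_bound: "\<And>N' \<theta>. (\<forall>n\<in>{1..N'}. \<theta> n > 0) \<Longrightarrow> (\<Sum>n=1..N'. \<theta> n) = 1 \<Longrightarrow>
         (\<forall>\<omega>\<in>space M. \<forall>p\<in>{1..N'} \<rightarrow>\<^sub>E Pol.
            attains_min Pol (\<lambda>q. \<Sum>n=1..N'. \<theta> n * ft n \<omega> (p n) q)) \<and>
         (\<forall>\<omega>\<in>space M. attains_max ({1..N'} \<rightarrow>\<^sub>E Pol)
            (\<lambda>p. INF q\<in>Pol. \<Sum>n=1..N'. \<theta> n * ft n \<omega> (p n) q)) \<and>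
         integrable M (\<lambda>\<omega>. SUP p\<in>{1..N'} \<rightarrow>\<^sub>E Pol. INF q\<in>Pol. \<Sum>n=1..N'. \<theta> n * ft n \<omega> (p n) q) \<and>
         (\<integral>\<omega>. (SUP p\<in>{1..N'} \<rightarrow>\<^sub>E Pol. INF q\<in>Pol. \<Sum>n=1..N'. \<theta> n * ft n \<omega> (p n) q) \<partial>M) \<le> eps"
    and N_pos: "N \<ge> 1"
    and w_pos: "\<And>n. n \<in> {1..N} \<Longrightarrow> w n > 0"
    and J_int: "\<And>n. n \<in> {1..N} \<Longrightarrow> integrable M (\<lambda>\<omega>. J (pis n \<omega>))"
    and regret_int: "integrable M (\<lambda>\<omega>. regret_w w N Pol (\<lambda>n. ft n \<omega> (pis n \<omega>)) (\<lambda>n. pis n \<omega>))"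
  shows "(\<integral>\<omega>. (\<Sum>n=1..N. w n * J (pis n \<omega>) / (\<Sum>k=1..N. w k)) \<partial>M)
    \<le> J pstar + C * (eps + (\<integral>\<omega>. regret_w w N Pol (\<lambda>n. ft n \<omega> (pis n \<omega>)) (\<lambda>n. pis n \<omega>)
                                    / (\<Sum>k=1..N. w k) \<partial>M))"
proof -
  interpret M: prob_space M by (rule prob)
  define W where "W = (\<Sum>k=1..N. w k)"
  have Wpos: "W > 0" unfolding W_def
    by (rule sum_pos) (use w_pos N_pos in auto)
  define \<theta> where "\<theta> n = w n / W" for n
  have th_pos: "\<forall>n\<in>{1..N}. \<theta> n > 0" using w_pos Wpos by (auto simp: \<theta>_def)
  have th_sum: "(\<Sum>n=1..N. \<theta> n) = 1"
    unfolding \<theta>_def using Wpos by (simp add: sum_divide_distrib[symmetric] W_def)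
  note EB = eps_bound[OF th_pos th_sum]
  define S where "S \<omega> = (SUP p\<in>{1..N} \<rightarrow>\<^sub>E Pol. INF q\<in>Pol. \<Sum>n=1..N. \<theta> n * ft n \<omega> (p n) q)" for \<omega>
  define R where "R \<omega> = regret_w w N Pol (\<lambda>n. ft n \<omega> (pis n \<omega>)) (\<lambda>n. pis n \<omega>)" for \<omega>
  define Fc where "Fc n \<omega> = Fcost d act Div pstar (pis n \<omega>) (pis n \<omega>)" for n \<omega>
  define a where "a n \<omega> = ft n \<omega> (pis n \<omega>) (pis n \<omega>)" for n \<omega>
  have S_int: "integrable M S" and S_le: "(\<integral>\<omega>. S \<omega> \<partial>M) \<le> eps"
    using EB unfolding S_def by auto
  have unb: "integrable M (a n) \<and> integrable M (Fc n) \<and> (\<integral>\<omega>. a n \<omega> \<partial>M) = (\<integral>\<omega>. Fc n \<omega> \<partial>M)"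
    if n: "n \<in> {1..N}" for n
  proof -
    have n1: "n \<ge> 1" using n by auto
    have sp: "space (G (n - 1)) = space M" using filt_sub[of "n-1"] by (auto simp: subalgebra_def)
    have A: "space M \<in> sets (G (n - 1))" using sets.top[of "G (n - 1)"] sp by metis
    from unbiased[OF n1 pis_meas[OF n1] _ A] pis_Pi[OF n1]
    have U: "integrable M (a n) \<and> integrable M (Fc n) \<and>
      (\<integral>\<omega>. indicator (space M) \<omega> * a n \<omega> \<partial>M) = (\<integral>\<omega>. indicator (space M) \<omega> * Fc n \<omega> \<partial>M)"
      unfolding a_def Fc_def by auto
    have e1: "(\<integral>\<omega>. indicator (space M) \<omega> * a n \<omega> \<partial>M) = (\<integral>\<omega>. a n \<omega> \<partial>M)"
      by (rule Bochner_Integration.integral_cong) auto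
    have e2: "(\<integral>\<omega>. indicator (space M) \<omega> * Fc n \<omega> \<partial>M) = (\<integral>\<omega>. Fc n \<omega> \<partial>M)"
      by (rule Bochner_Integration.integral_cong) auto
    show ?thesis using U e1 e2 by simp
  qed
  have pt1: "(\<Sum>n=1..N. w n * J (pis n \<omega>) / W) \<le> J pstar + C * (\<Sum>n=1..N. \<theta> n * Fc n \<omega>)"
    if \<omega>: "\<omega> \<in> space M" for \<omega>
  proof -
    have "(\<Sum>n=1..N. w n * J (pis n \<omega>) / W) \<le> (\<Sum>n=1..N. \<theta> n * J pstar + C * (\<theta> n * Fc n \<omega>))"
    proof (rule sum_mono)
      fix n assume n: "n \<in> {1..N}"
      have "J (pis n \<omega>) \<le> J pstar + C * Fc n \<omega>"
        using perf[OF pis_Pi[OF _ \<omega>]] n unfolding Fc_def by force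
      hence "\<theta> n * J (pis n \<omega>) \<le> \<theta> n * (J pstar + C * Fc n \<omega>)"
        proof (rule mult_left_mono)
        show "0 \<le> \<theta> n" using th_pos n less_imp_le by blast
      qed
      thus "w n * J (pis n \<omega>) / W \<le> \<theta> n * J pstar + C * (\<theta> n * Fc n \<omega>)"
        by (simp add: \<theta>_def algebra_simps)
    qed
    also have "\<dots> = J pstar * (\<Sum>n=1..N. \<theta> n) + C * (\<Sum>n=1..N. \<theta> n * Fc n \<omega>)"
      by (simp add: sum.distrib sum_distrib_left sum_distrib_right mult.commute)
    finally show ?thesis using th_sum by simp
  qed
  have pt2: "(\<Sum>n=1..N. \<theta> n * a n \<omega>) \<le> R \<omega> / W + S \<omega>" if \<omega>: "\<omega> \<in> space M" for \<omega>
  proof -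
    define p0 where "p0 = restrict (\<lambda>n. pis n \<omega>) {1..N}"
    have p0: "p0 \<in> {1..N} \<rightarrow>\<^sub>E Pol" using pis_Pi \<omega> unfolding p0_def by auto
    define g where "g q = (\<Sum>n=1..N. \<theta> n * ft n \<omega> (pis n \<omega>) q)" for q
    have geq: "(\<lambda>q. \<Sum>n=1..N. \<theta> n * ft n \<omega> (p0 n) q) = g"
      unfolding g_def p0_def by (intro ext sum.cong) auto
    have "attains_min Pol g" using EB \<omega> p0 geq by metis
    then obtain q0 where q0: "q0 \<in> Pol" "\<And>y. y \<in> Pol \<Longrightarrow> g q0 \<le> g y"
      unfolding attains_min_def by auto
    define h where "h q = (\<Sum>n=1..N. w n * ft n \<omega> (pis n \<omega>) (pis n \<omega>) - w n * ft n \<omega> (pis n \<omega>) q)" for q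
    have hg: "h q = W * (\<Sum>n=1..N. \<theta> n * a n \<omega>) - W * g q" for q
      unfolding h_def g_def a_def \<theta>_def using Wpos
      by (simp add: sum_subtractf sum_distrib_left)
    have Rdef: "R \<omega> = (SUP q\<in>Pol. h q)" unfolding R_def regret_w_def h_def by simp
    have "bdd_above (h ` Pol)"
      by (rule bdd_aboveI2[where M="h q0"]) (use q0 Wpos in \<open>auto simp: hg\<close>)
    hence "h q0 \<le> R \<omega>" unfolding Rdef using q0(1) by (rule cSUP_upper2) auto
    hence 1: "(\<Sum>n=1..N. \<theta> n * a n \<omega>) \<le> R \<omega> / W + g q0"
      using Wpos by (simp add: hg field_simps)
    have "g q0 \<le> (INF q\<in>Pol. g q)" using q0 by (intro cINF_greatest) auto
    also have "\<dots> = (INF q\<in>Pol. \<Sum>n=1..N. \<theta> n * ft n \<omega> (p0 n) q)" unfolding geq ..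
    also have "\<dots> \<le> S \<omega>" unfolding S_def
    proof (rule cSUP_upper[OF p0])
      have "attains_max ({1..N} \<rightarrow>\<^sub>E Pol) (\<lambda>p. INF q\<in>Pol. \<Sum>n=1..N. \<theta> n * ft n \<omega> (p n) q)"
        using EB \<omega> by blast
      then show "bdd_above ((\<lambda>p. INF q\<in>Pol. \<Sum>n=1..N. \<theta> n * ft n \<omega> (p n) q) ` ({1..N} \<rightarrow>\<^sub>E Pol))"
        unfolding attains_max_def by (auto intro: bdd_aboveI2)
    qed
    finally show ?thesis using 1 by simp
  qed
  have Rint: "integrable M R" using regret_int unfolding R_def by simp
  have FcI: "integrable M (\<lambda>\<omega>. \<Sum>n=1..N. \<theta> n * Fc n \<omega>)" using unb by auto
  have aI: "integrable M (\<lambda>\<omega>. \<Sum>n=1..N. \<theta> n * a n \<omega>)" using unb by auto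
  have eqFa: "(\<integral>\<omega>. (\<Sum>n=1..N. \<theta> n * Fc n \<omega>) \<partial>M) = (\<integral>\<omega>. (\<Sum>n=1..N. \<theta> n * a n \<omega>) \<partial>M)"
    using unb by (simp add: integral_sum)
  have "(\<integral>\<omega>. (\<Sum>n=1..N. w n * J (pis n \<omega>) / W) \<partial>M) \<le> (\<integral>\<omega>. J pstar + C * (\<Sum>n=1..N. \<theta> n * Fc n \<omega>) \<partial>M)"
    using pt1 J_int FcI by (intro integral_mono) auto
  also have "\<dots> = J pstar + C * (\<integral>\<omega>. (\<Sum>n=1..N. \<theta> n * a n \<omega>) \<partial>M)"
    using FcI eqFa by (simp add: M.prob_space)
  also have "(\<integral>\<omega>. (\<Sum>n=1..N. \<theta> n * a n \<omega>) \<partial>M) \<le> (\<integral>\<omega>. R \<omega> / W + S \<omega> \<partial>M)"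
    using pt2 aI Rint S_int by (intro integral_mono) auto
  also have "(\<integral>\<omega>. R \<omega> / W + S \<omega> \<partial>M) = (\<integral>\<omega>. R \<omega> / W \<partial>M) + (\<integral>\<omega>. S \<omega> \<partial>M)"
    using Rint S_int by simp
  finally have "(\<integral>\<omega>. (\<Sum>n=1..N. w n * J (pis n \<omega>) / W) \<partial>M)
      \<le> J pstar + C * ((\<integral>\<omega>. R \<omega> / W \<partial>M) + (\<integral>\<omega>. S \<omega> \<partial>M))"
    using C_nonneg by (simp add: mult_left_mono)
  also have "\<dots> \<le> J pstar + C * ((\<integral>\<omega>. R \<omega> / W \<partial>M) + eps)"
    using S_le C_nonneg by (simp add: mult_left_mono)
  finally show ?thesis unfolding W_def R_def by (simp add: add.commute)
qed

end
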